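(* Let $\lambda_1,\lambda_2,\alpha>0$ and $\theta\in[-1,1]$. Let $(X_1,X_2)$ have joint pdf $$f(x_1,x_2)=\left\{1+\theta\left[1-2e^{-\lambda_1x_1}\right]\left[1-2e^{-\lambda_2x_2}\right]\right\}\lambda_1e^{-\lambda_1x_1}\lambda_2e^{-\lambda_2x_2},\qquad x_1,x_2>0$$ (exponential marginals with rates $\lambda_1,\lambda_2$ coupled by the Farlie–Gumbel–Morgenstern copula $C(u,v)=uv\{1+\theta(1-u)(1-v)\}$). Then $$P(\alpha X_1>X_2)=\frac{\lambda_2\alpha}{\lambda_1+\lambda_2\alpha}+\theta\lambda_1\left[\frac{2}{2\lambda_1+\lambda_2\alpha}+\frac{1}{\lambda_1+2\lambda_2\alpha}-\frac{2}{\lambda_1+\lambda_2\alpha}\right],$$ and the conditional pdf of $X=X_1\mid\alpha X_1>X_2$ is, for $x>0$, $$f^{w}(x;\lambda_1,\lambda_2,\alpha,\theta)=K\,e^{-\lambda_1x}\left(1-e^{-\lambda_2\alpha x}\right)\left[1-\theta e^{-\lambda_2\alpha x}\left(1-2e^{-\lambda_1x}\right)\right],\qquad K=\frac{\lambda_1}{P(\alpha X_1>X_2)}.$$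
   Context: The distribution with this pdf $f^w$ is called the Generalized Weighted Exponential Distribution (GWED) with parameters $\lambda_1,\lambda_2,\alpha>0$, $\theta\in[-1,1]$. *)

theory Defs
  imports "HOL-Probability.Probability"
begin

definition fgm_exp_pdf :: "real \<Rightarrow> real \<Rightarrow> real \<Rightarrow> real \<times> real \<Rightarrow> real" where
  "fgm_exp_pdf l1 l2 th = (\<lambda>(x1, x2).
     if x1 > 0 \<and> x2 > 0 then
       (1 + th * (1 - 2 * exp (- l1 * x1)) * (1 - 2 * exp (- l2 * x2)))
         * (l1 * exp (- l1 * x1)) * (l2 * exp (- l2 * x2))
     else 0)"

definition gwed_prob :: "real \<Rightarrow> real \<Rightarrow> real \<Rightarrow> real \<Rightarrow> real" where
  "gwed_prob l1 l2 a th =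
     l2 * a / (l1 + l2 * a)
     + th * l1 * (2 / (2 * l1 + l2 * a) + 1 / (l1 + 2 * l2 * a) - 2 / (l1 + l2 * a))"

definition gwed_pdf :: "real \<Rightarrow> real \<Rightarrow> real \<Rightarrow> real \<Rightarrow> real \<Rightarrow> real" where
  "gwed_pdf l1 l2 a th x =
     (if x > 0 then
        (l1 / gwed_prob l1 l2 a th) * exp (- l1 * x) * (1 - exp (- l2 * a * x))
          * (1 - th * exp (- l2 * a * x) * (1 - 2 * exp (- l1 * x)))
      else 0)"

end

theory Submission imports Defs "HOL-Real_Asymp.Real_Asymp" begin

lemma abs_prod_le1:
  fixes p q r :: real
  assumes "\<bar>p\<bar> \<le> 1" "\<bar>q\<bar> \<le> 1" "\<bar>r\<bar> \<le> 1"
  shows "0 \<le> 1 + p * q * r" "0 \<le> 1 - p * q * r"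
proof -
  have "\<bar>p * q * r\<bar> \<le> 1" using assms by (simp add: abs_mult mult_le_one)
  then show "0 \<le> 1 + p * q * r" "0 \<le> 1 - p * q * r" by linarith+
qed

lemma exp_neg_bounds: fixes c y :: real assumes "0 \<le> c" "0 \<le> y"
  shows "\<bar>1 - 2 * exp (- c * y)\<bar> \<le> 1"
proof -
  have "exp (- c * y) \<le> 1" using assms by (simp add: mult_nonneg_nonneg)
  moreover have "0 < exp (- c * y)" by simp
  ultimately show ?thesis by linarith
qed

definition gfun :: "real \<Rightarrow> real \<Rightarrow> real \<Rightarrow> real \<Rightarrow> real \<Rightarrow> real" where
  "gfun l1 l2 a th x = (if x > 0 then l1 * exp (- l1 * x) * (1 - exp (- l2 * a * x))
          * (1 - th * exp (- l2 * a * x) * (1 - 2 * exp (- l1 * x))) else 0)"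

lemma inner:
  assumes "l1 > 0" "l2 > 0" "a > 0" "\<bar>th\<bar> \<le> 1"
  shows "(\<integral>\<^sup>+y. ennreal (fgm_exp_pdf l1 l2 th (x, y)) * indicator {..<a*x} y \<partial>lborel)
     = ennreal (gfun l1 l2 a th x)"
proof (cases "x > 0")
  case False
  then show ?thesis by (simp add: fgm_exp_pdf_def gfun_def)
next
  case True
  define A where "A = l1 * exp (- l1 * x)"
  define B where "B = 1 - 2 * exp (- l1 * x)"
  define t where "t = a * x"
  have t: "t > 0" using True assms by (simp add: t_def)
  define F where "F = (\<lambda>y. A * (1 + th * B * (1 - 2 * exp (- l2 * y))) * (l2 * exp (- l2 * y)))"
  define G where "G = (\<lambda>y. A * (- exp (- l2 * y) + th * B * (exp (-2 * l2 * y) - exp (- l2 * y))))"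
  have B1: "\<bar>B\<bar> \<le> 1" unfolding B_def using assms True by (intro exp_neg_bounds) auto
  have Fnn: "0 \<le> F y" if "0 \<le> y" for y
  proof -
    have "0 \<le> 1 + th * B * (1 - 2 * exp (- l2 * y))"
      using abs_prod_le1(1)[OF assms(4) B1 exp_neg_bounds[of l2 y]] assms that by auto
    then show ?thesis unfolding F_def A_def using assms by simp
  qed
  have D: "DERIV G y :> F y" for y
    unfolding G_def F_def
    by (rule derivative_eq_intros refl | simp)+ (simp add: algebra_simps exp_diff[symmetric] exp_add[symmetric])
  have "(\<integral>\<^sup>+y. ennreal (fgm_exp_pdf l1 l2 th (x, y)) * indicator {..<a*x} y \<partial>lborel)
      = (\<integral>\<^sup>+y. ennreal (F y) * indicator {0..t} y \<partial>lborel)"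
  proof (rule nn_integral_cong_AE)
    show "AE y in lborel. ennreal (fgm_exp_pdf l1 l2 th (x, y)) * indicator {..<a*x} y
        = ennreal (F y) * indicator {0..t} y"
      using AE_lborel_singleton[of 0] AE_lborel_singleton[of t]
    proof eventually_elim
      case (elim y)
      then show ?case using True
        by (auto simp: fgm_exp_pdf_def F_def A_def B_def t_def indicator_def mult_ac)
    qed
  qed
  also have "\<dots> = ennreal (G t - G 0)"
    by (rule nn_integral_FTC_Icc) (use D Fnn t in \<open>auto simp: F_def\<close>)
  also have "G t - G 0 = gfun l1 l2 a th x"
    using True unfolding G_def gfun_def A_def B_def t_def
    by (simp add: algebra_simps exp_add[symmetric])
  finally show ?thesis .
qed

lemma exp_lim0: fixes k :: real assumes "k > 0" shows "((\<lambda>x. exp (- k * x)) \<longlongrightarrow> 0) at_top"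
  using assms by real_asymp

lemma total:
  assumes "l1 > 0" "l2 > 0" "a > 0" "\<bar>th\<bar> \<le> 1"
  shows "(\<integral>\<^sup>+x. ennreal (gfun l1 l2 a th x) \<partial>lborel) = ennreal (gwed_prob l1 l2 a th)"
proof -
  define c where "c = l2 * a"
  have c: "c > 0" using assms by (simp add: c_def)
  define gf where "gf = (\<lambda>x. l1 * exp (- l1 * x) * (1 - exp (- c * x))
          * (1 - th * exp (- c * x) * (1 - 2 * exp (- l1 * x))))"
  define H where "H = (\<lambda>x. l1 * (- exp (- l1 * x) / l1
      + (1 + th) * (exp (- l1 * x) * exp (- c * x)) / (l1 + c)
      - th * (exp (- l1 * x) * exp (- c * x)^2) / (l1 + 2 * c)
      - 2 * th * (exp (- l1 * x)^2 * exp (- c * x)) / (2 * l1 + c)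
      + th * (exp (- l1 * x)^2 * exp (- c * x)^2) / (l1 + c)))"
  have gfun_eq: "ennreal (gfun l1 l2 a th x) = ennreal (gf x) * indicator {0..} x" for x
    by (cases "x > 0") (auto simp: gfun_def gf_def c_def indicator_def mult_ac)
  have gfnn: "0 \<le> gf x" if "0 \<le> x" for x
  proof -
    have "0 \<le> 1 - th * exp (- c * x) * (1 - 2 * exp (- l1 * x))"
    proof (rule abs_prod_le1(2))
      show "\<bar>th\<bar> \<le> 1" by fact
      show "\<bar>exp (- c * x)\<bar> \<le> 1" using c that by (simp add: mult_nonneg_nonneg)
      show "\<bar>1 - 2 * exp (- l1 * x)\<bar> \<le> 1" using assms that by (intro exp_neg_bounds) auto
    qed
    moreover have "0 \<le> 1 - exp (- c * x)" using c that by (simp add: mult_nonneg_nonneg)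
    ultimately show ?thesis unfolding gf_def using assms by simp
  qed
  have nz: "l1 \<noteq> 0" "l1 + c \<noteq> 0" "l1 + 2 * c \<noteq> 0" "2 * l1 + c \<noteq> 0" using assms c by auto
  have D: "DERIV H x :> gf x" for x
    unfolding H_def gf_def
    apply (rule derivative_eq_intros refl nz)+
    using nz apply (simp add: divide_simps)
    apply (simp add: algebra_simps power2_eq_square)
    done
  have L: "(H \<longlongrightarrow> 0) at_top"
  proof -
    have "(H \<longlongrightarrow> l1 * (- 0 / l1 + (1 + th) * (0 * 0) / (l1 + c) - th * (0 * 0^2) / (l1 + 2 * c)
      - 2 * th * (0^2 * 0) / (2 * l1 + c) + th * (0^2 * 0^2) / (l1 + c))) at_top"
      unfolding H_def using exp_lim0[OF assms(1)] exp_lim0[OF c]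
      by (intro tendsto_intros) (use nz in auto)
    then show ?thesis by simp
  qed
  have "(\<integral>\<^sup>+x. ennreal (gfun l1 l2 a th x) \<partial>lborel) = (\<integral>\<^sup>+x. ennreal (gf x) * indicator {0..} x \<partial>lborel)"
    by (simp add: gfun_eq)
  also have "\<dots> = ennreal (0 - H 0)"
    by (rule nn_integral_FTC_atLeast[OF _ D gfnn L]) (simp add: gf_def)
  also have "0 - H 0 = gwed_prob l1 l2 a th"
  proof -
    have "gwed_prob l1 l2 a th = c / (l1 + c)
     + th * l1 * (2 / (2 * l1 + c) + 1 / (l1 + 2 * c) - 2 / (l1 + c))"
      by (simp add: gwed_prob_def c_def mult_ac)
    moreover have "0 - H 0 = c / (l1 + c)
     + th * l1 * (2 / (2 * l1 + c) + 1 / (l1 + 2 * c) - 2 / (l1 + c))"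
      unfolding H_def using assms c
      apply (simp add: divide_simps add_pos_pos)
      apply (simp add: algebra_simps)
      done
    ultimately show ?thesis by simp
  qed
  finally show ?thesis .
qed

lemma gfun_nonneg:
  assumes "l1 > 0" "l2 > 0" "a > 0" "\<bar>th\<bar> \<le> 1"
  shows "0 \<le> gfun l1 l2 a th x"
proof (cases "x > 0")
  case True
  have "0 \<le> 1 - th * exp (- l2 * a * x) * (1 - 2 * exp (- l1 * x))"
  proof (rule abs_prod_le1(2))
    show "\<bar>th\<bar> \<le> 1" by fact
    have "0 \<le> l2 * a * x" using assms True by simp
    then show "\<bar>exp (- l2 * a * x)\<bar> \<le> 1" by simp
    show "\<bar>1 - 2 * exp (- l1 * x)\<bar> \<le> 1" using assms True by (intro exp_neg_bounds) auto
  qed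
  moreover have "0 \<le> 1 - exp (- l2 * a * x)" using assms True by simp
  ultimately show ?thesis unfolding gfun_def using assms True by simp
qed (simp add: gfun_def)

lemma gfun_pos:
  assumes "l1 > 0" "l2 > 0" "a > 0" "\<bar>th\<bar> \<le> 1" "x > 0"
  shows "0 < gfun l1 l2 a th x"
proof -
  have e: "exp (- l2 * a * x) < 1" using assms by simp
  have "\<bar>th * exp (- l2 * a * x) * (1 - 2 * exp (- l1 * x))\<bar> < 1"
  proof -
    have "\<bar>1 - 2 * exp (- l1 * x)\<bar> \<le> 1" using assms by (intro exp_neg_bounds) auto
    then have "\<bar>th\<bar> * \<bar>1 - 2 * exp (- l1 * x)\<bar> \<le> 1" using assms by (simp add: mult_le_one)
    moreover have "\<bar>th * exp (- l2 * a * x) * (1 - 2 * exp (- l1 * x))\<bar>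
       = exp (- l2 * a * x) * (\<bar>th\<bar> * \<bar>1 - 2 * exp (- l1 * x)\<bar>)" by (simp add: abs_mult)
    moreover have "exp (- l2 * a * x) * (\<bar>th\<bar> * \<bar>1 - 2 * exp (- l1 * x)\<bar>) \<le> exp (- l2 * a * x) * 1"
      using calculation(1) by (intro mult_left_mono) auto
    ultimately show ?thesis using e by linarith
  qed
  then have "0 < 1 - th * exp (- l2 * a * x) * (1 - 2 * exp (- l1 * x))" by linarith
  moreover have "0 < 1 - exp (- l2 * a * x)" using e by simp
  ultimately show ?thesis unfolding gfun_def using assms by simp
qed

lemma gwed_prob_pos:
  assumes "l1 > 0" "l2 > 0" "a > 0" "\<bar>th\<bar> \<le> 1"
  shows "0 < gwed_prob l1 l2 a th"
proof -
  have m: "(\<lambda>x. ennreal (gfun l1 l2 a th x)) \<in> borel_measurable lborel"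
    unfolding gfun_def by measurable
  have "(\<integral>\<^sup>+x. ennreal (gfun l1 l2 a th x) \<partial>lborel) \<noteq> 0"
  proof
    assume "(\<integral>\<^sup>+x. ennreal (gfun l1 l2 a th x) \<partial>lborel) = 0"
    then have "AE x in lborel. ennreal (gfun l1 l2 a th x) = 0"
      using nn_integral_0_iff_AE[OF m] by simp
    then have "AE x in lborel. \<not> x \<in> {0<..<1::real}"
      by eventually_elim (use gfun_pos[OF assms] in force)
    then have "{0<..<1::real} \<in> null_sets lborel"
      by (subst AE_iff_null_sets) auto
    then have "emeasure lborel {0<..<1::real} = 0" by auto
    then show False by simp
  qed
  then have "ennreal (gwed_prob l1 l2 a th) \<noteq> 0" using total[OF assms] by simp
  then show ?thesis using ennreal_eq_0_iff by force
qed

lemma core: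
  fixes M :: "'s measure" and X1 X2 :: "'s \<Rightarrow> real"
  assumes "l1 > 0" "l2 > 0" "a > 0" "\<bar>th\<bar> \<le> 1"
    and D: "distributed M (lborel \<Otimes>\<^sub>M lborel) (\<lambda>\<omega>. (X1 \<omega>, X2 \<omega>))
           (\<lambda>p. ennreal (fgm_exp_pdf l1 l2 th p))"
    and B: "B \<in> sets borel"
  shows "emeasure M {\<omega> \<in> space M. X1 \<omega> \<in> B \<and> a * X1 \<omega> > X2 \<omega>}
     = (\<integral>\<^sup>+x. ennreal (gfun l1 l2 a th x) * indicator B x \<partial>lborel)"
proof -
  define S where "S = {p :: real \<times> real. fst p \<in> B \<and> snd p < a * fst p}"
  have fm[measurable]: "(\<lambda>p. ennreal (fgm_exp_pdf l1 l2 th p)) \<in> borel_measurable (lborel \<Otimes>\<^sub>M lborel)"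
    using distributed_borel_measurable[OF D] .
  have Bm[measurable]: "B \<in> sets lborel" using B by simp
  have Sm[measurable]: "S \<in> sets (lborel \<Otimes>\<^sub>M lborel)"
  proof -
    have "Measurable.pred (lborel \<Otimes>\<^sub>M lborel) (\<lambda>p::real\<times>real. fst p \<in> B \<and> snd p < a * fst p)"
      by measurable
    then show ?thesis unfolding S_def pred_def by (simp add: space_pair_measure)
  qed
  have eqs: "{\<omega> \<in> space M. X1 \<omega> \<in> B \<and> a * X1 \<omega> > X2 \<omega>} = (\<lambda>\<omega>. (X1 \<omega>, X2 \<omega>)) -` S \<inter> space M"
    by (auto simp: S_def)
  have "emeasure M {\<omega> \<in> space M. X1 \<omega> \<in> B \<and> a * X1 \<omega> > X2 \<omega>}
      = (\<integral>\<^sup>+p. ennreal (fgm_exp_pdf l1 l2 th p) * indicator S p \<partial>(lborel \<Otimes>\<^sub>M lborel))"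
    unfolding eqs by (rule distributed_emeasure[OF D Sm])
  also have "\<dots> = (\<integral>\<^sup>+x. \<integral>\<^sup>+y. ennreal (fgm_exp_pdf l1 l2 th (x, y)) * indicator S (x, y) \<partial>lborel \<partial>lborel)"
    by (rule lborel.nn_integral_fst[symmetric]) measurable
  also have "\<dots> = (\<integral>\<^sup>+x. ennreal (gfun l1 l2 a th x) * indicator B x \<partial>lborel)"
  proof (rule nn_integral_cong)
    fix x :: real
    show "(\<integral>\<^sup>+y. ennreal (fgm_exp_pdf l1 l2 th (x, y)) * indicator S (x, y) \<partial>lborel)
        = ennreal (gfun l1 l2 a th x) * indicator B x"
    proof (cases "x \<in> B")
      case True
      then have "(\<integral>\<^sup>+y. ennreal (fgm_exp_pdf l1 l2 th (x, y)) * indicator S (x, y) \<partial>lborel)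
         = (\<integral>\<^sup>+y. ennreal (fgm_exp_pdf l1 l2 th (x, y)) * indicator {..<a*x} y \<partial>lborel)"
        by (intro nn_integral_cong) (auto simp: S_def indicator_def)
      then show ?thesis using True inner[OF assms(1-4)] by simp
    next
      case False
      then show ?thesis by (simp add: S_def indicator_def)
    qed
  qed
  finally show ?thesis .
qed

theorem mainTheorem2:
  fixes M :: "'s measure" and X1 X2 :: "'s \<Rightarrow> real"
    and l1 l2 a th :: real
  assumes "prob_space M"
    and "l1 > 0" and "l2 > 0" and "a > 0" and "-1 \<le> th" and "th \<le> 1"
    and "distributed M (lborel \<Otimes>\<^sub>M lborel) (\<lambda>\<omega>. (X1 \<omega>, X2 \<omega>))
           (\<lambda>p. ennreal (fgm_exp_pdf l1 l2 th p))"
  shows "measure M {\<omega> \<in> space M. a * X1 \<omega> > X2 \<omega>} = gwed_prob l1 l2 a th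
    \<and> distributed (uniform_measure M {\<omega> \<in> space M. a * X1 \<omega> > X2 \<omega>}) lborel X1
        (\<lambda>x. ennreal (gwed_pdf l1 l2 a th x))"
proof -
  have th: "\<bar>th\<bar> \<le> 1" using assms(5,6) by simp
  note D = assms(7)
  note ps = assms(2-4) th
  define A where "A = {\<omega> \<in> space M. a * X1 \<omega> > X2 \<omega>}"
  define P where "P = gwed_prob l1 l2 a th"
  have P: "P > 0" unfolding P_def by (rule gwed_prob_pos[OF ps])
  have Xm: "(\<lambda>\<omega>. (X1 \<omega>, X2 \<omega>)) \<in> measurable M (lborel \<Otimes>\<^sub>M lborel)"
    using distributed_measurable[OF D] .
  have X1m[measurable]: "X1 \<in> borel_measurable M"
    using Xm by (simp add: measurable_pair_iff o_def)
  have X2m[measurable]: "X2 \<in> borel_measurable M"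
    using Xm by (simp add: measurable_pair_iff o_def)
  have Am[measurable]: "A \<in> sets M" unfolding A_def by measurable
  have core': "emeasure M (X1 -` B \<inter> space M \<inter> A) = (\<integral>\<^sup>+x. ennreal (gfun l1 l2 a th x) * indicator B x \<partial>lborel)"
    if "B \<in> sets borel" for B
  proof -
    have "X1 -` B \<inter> space M \<inter> A = {\<omega> \<in> space M. X1 \<omega> \<in> B \<and> a * X1 \<omega> > X2 \<omega>}"
      by (auto simp: A_def)
    then show ?thesis using core[OF ps D that] by simp
  qed
  have EA: "emeasure M A = ennreal P"
    using core'[of UNIV] total[OF ps] by (simp add: P_def)
  have MA: "measure M A = P"
    using EA P by (simp add: measure_def)
  have "distributed (uniform_measure M A) lborel X1 (\<lambda>x. ennreal (gwed_pdf l1 l2 a th x))"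
    unfolding distributed_def
  proof (intro conjI)
    show "(\<lambda>x. ennreal (gwed_pdf l1 l2 a th x)) \<in> borel_measurable lborel"
      unfolding gwed_pdf_def by measurable
    show "X1 \<in> measurable (uniform_measure M A) lborel"
      by (subst measurable_cong_sets[OF sets_uniform_measure refl]) simp
    show "distr (uniform_measure M A) lborel X1 = density lborel (\<lambda>x. ennreal (gwed_pdf l1 l2 a th x))"
    proof (rule measure_eqI)
      fix B assume "B \<in> sets (distr (uniform_measure M A) lborel X1)"
      then have B: "B \<in> sets borel" by simp
      have "emeasure (distr (uniform_measure M A) lborel X1) B
          = emeasure (uniform_measure M A) (X1 -` B \<inter> space M)"
        using B by (subst emeasure_distr) (auto simp: measurable_cong_sets[OF sets_uniform_measure refl])
      also have "\<dots> = emeasure M (X1 -` B \<inter> space M \<inter> A) / ennreal P"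
        using B by (subst emeasure_uniform_measure) (auto simp: EA Int_commute)
      also have "\<dots> = (\<integral>\<^sup>+x. ennreal (gfun l1 l2 a th x) * indicator B x / ennreal P \<partial>lborel)"
        using B by (simp add: core' nn_integral_divide gfun_def)
      also have "\<dots> = (\<integral>\<^sup>+x. ennreal (gwed_pdf l1 l2 a th x) * indicator B x \<partial>lborel)"
      proof (rule nn_integral_cong)
        fix x
        have "ennreal (gfun l1 l2 a th x) / ennreal P = ennreal (gwed_pdf l1 l2 a th x)"
          using P gfun_nonneg[OF ps, of x]
          by (simp add: divide_ennreal gfun_def gwed_pdf_def P_def)
        then show "ennreal (gfun l1 l2 a th x) * indicator B x / ennreal P = ennreal (gwed_pdf l1 l2 a th x) * indicator B x"
          by (auto simp: indicator_def)
      qed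
      also have "\<dots> = emeasure (density lborel (\<lambda>x. ennreal (gwed_pdf l1 l2 a th x))) B"
        using B by (subst emeasure_density) (auto simp: gwed_pdf_def)
      finally show "emeasure (distr (uniform_measure M A) lborel X1) B = emeasure (density lborel (\<lambda>x. ennreal (gwed_pdf l1 l2 a th x))) B" .
    qed simp
  qed
  then show ?thesis using MA unfolding A_def P_def by simp
qed
end
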